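(* There is a neighborhood $U_0$ of $(0,0)\in\mathbb{R}^k\times\mathbb{R}^{n-k}$ and a neighborhood $U_1$ of $p_0\in\mathcal{O}$ such that $$G:U_0\longrightarrow U_1$$ is a Lipschitz homeomorphism, with Lipschitz inverse.
   Context: Let $\Omega$ be a manifold of dimension $n$ and $\mathcal{E}\subset T\Omega$ a Lipschitz subbundle of fiber dimension $k<n$ which is involutive (brackets of Lipschitz sections are $L^\infty$ sections of $\mathcal{E}$). Fix $p_0\in\Omega$ and coordinates $x\in\mathbb{R}^n$ centered at $p_0=0$ on a neighborhood $\mathcal{O}$, in which $\mathcal{E}$ is spanned by Lipschitz vector fields of the form $$Y_i=\partial_i+\sum_{\ell\ge k+1} D_{i\ell}(x)\,\partial_\ell,\quad 1\le i\le k,$$ with $D_{i\ell}$ Lipschitz and $D_{i\ell}(0)=0$, and satisfying $[Y_i,Y_j]=0$ for $1\le i,j\le k$. For such commuting Lipschitz vector fields the local flows $\mathcal{F}^{t_j}_{Y_j}$ commute, and $y(t,x)=\mathcal{F}^{t_1}_{Y_1}\circ\cdots\circ\mathcal{F}^{t_k}_{Y_k}(x)$ is the unique solution of $\partial y/\partial t_j=Y_j(y)$, $y(0,x)=x$, defined for $|t_j|<\delta$ and $x$ in a compact subset, and is Lipschitz in $(t,x)$. Write $\mathcal{F}^t=\mathcal{F}^{t_1}_{Y_1}\circ\cdots\circ\mathcal{F}^{t_k}_{Y_k}$ and, for $z$ close to $0$ in $\mathbb{R}^{n-k}$ and $|t|<\delta$, define $$G(t,z)=y(t,0,z)=\mathcal{F}^t(0,z).$$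 *)

theory Defs
  imports "HOL-Analysis.Analysis"
begin

text \<open>Coordinates: R^n = R^k x R^(n-k) is modelled as the product type 'a x 'b,
 with 'a (dimension k) and 'b (dimension n-k) Euclidean spaces.
 For a basis vector i of 'a, the vector field
   Y_i = d_i + sum_l D_il d_l
 is the map x |-> (i, D i x).\<close>

definition coord_field :: "('a::euclidean_space \<Rightarrow> 'a \<times> 'b \<Rightarrow> 'b::euclidean_space)
     \<Rightarrow> 'a \<Rightarrow> 'a \<times> 'b \<Rightarrow> 'a \<times> 'b" where
  "coord_field D i x = (i, D i x)"

text \<open>Vanishing of the Lie bracket [X,Y] = DY.X - DX.Y of two Lipschitz vector
 fields on the open set Ob, as an L-infinity section, i.e. almost everywhere
 (Lipschitz fields are differentiable almost everywhere).\<close>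

definition bracket_zero_ae ::
  "('n::euclidean_space) set \<Rightarrow> ('n \<Rightarrow> 'n) \<Rightarrow> ('n \<Rightarrow> 'n) \<Rightarrow> bool" where
  "bracket_zero_ae Ob X Y \<longleftrightarrow>
     (AE x in lebesgue. x \<in> Ob \<longrightarrow>
        (\<exists>X' Y'. (X has_derivative X') (at x) \<and> (Y has_derivative Y') (at x) \<and>
                 Y' (X x) - X' (Y x) = 0))"

definition time_box :: "real \<Rightarrow> 'a::euclidean_space set" where
  "time_box \<delta> = {t. \<forall>j\<in>Basis. \<bar>t \<bullet> j\<bar> < \<delta>}"

end

theory Submission imports Defs "HOL-Homology.Invariance_of_Domain" begin

lemma shift_vd:
  fixes g :: "real \<Rightarrow> 'c::real_normed_vector"
  assumes "((\<lambda>h. g (r + h)) has_vector_derivative v) (at 0)"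
  shows "(g has_vector_derivative v) (at r)"
proof -
  have 1: "((\<lambda>x. x - r) has_vector_derivative 1) (at r)"
    by (auto intro!: derivative_eq_intros)
  have "((\<lambda>h. g (r + h)) \<circ> (\<lambda>x. x - r) has_vector_derivative (1 *\<^sub>R v)) (at r)"
    by (rule vector_diff_chain_at[OF 1]) (simp add: assms)
  then show ?thesis by (simp add: o_def)
qed

lemma seg_bound:
  fixes g :: "real \<Rightarrow> 'c::real_normed_vector"
  assumes d: "\<And>r. r \<in> closed_segment 0 c \<Longrightarrow> ((\<lambda>h. g (r + h)) has_vector_derivative g' r) (at 0)"
    and b: "\<And>r. r \<in> closed_segment 0 c \<Longrightarrow> norm (g' r) \<le> M"
  shows "norm (g c - g 0) \<le> M * \<bar>c\<bar>"
proof -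
  have "norm (g c - g 0) \<le> M * norm (c - 0)"
  proof (rule differentiable_bound[where f' = "\<lambda>r h. h *\<^sub>R g' r"])
    show "convex (closed_segment 0 c)" by simp
    fix x assume x: "x \<in> closed_segment 0 c"
    have "(g has_vector_derivative g' x) (at x)" by (rule shift_vd[OF d[OF x]])
    then show "(g has_derivative (\<lambda>h. h *\<^sub>R g' x)) (at x within closed_segment 0 c)"
      unfolding has_vector_derivative_def by (rule has_derivative_at_withinI)
    have "onorm (\<lambda>h::real. h *\<^sub>R g' x) = norm (g' x)"
      using onorm_scaleR_left[of "\<lambda>h::real. h" "g' x"] onorm_id[where 'a=real] by (simp add: id_def)
    then show "onorm (\<lambda>h::real. h *\<^sub>R g' x) \<le> M" using b[OF x] by simp
  qed auto
  then show ?thesis by simp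
qed

lemma lin_vd: "((\<lambda>r::real. s + r *\<^sub>R (j::'a::real_normed_vector)) has_vector_derivative j) (at 0)"
proof -
  have "((\<lambda>r::real. r *\<^sub>R j) has_vector_derivative 1 *\<^sub>R j) (at 0)"
    by (rule bounded_linear.has_vector_derivative[OF bounded_linear_scaleR_left has_vector_derivative_id])
  then have "((\<lambda>r::real. r *\<^sub>R j + s) has_vector_derivative j) (at 0)"
    by (simp add: has_vector_derivative_add_const)
  then show ?thesis by (simp add: add.commute)
qed
lemma inner_partial:
  fixes t :: "'a::euclidean_space"
  assumes "S \<subseteq> Basis" "i \<in> Basis"
  shows "(\<Sum>j\<in>S. (t \<bullet> j) *\<^sub>R j) \<bullet> i = (if i \<in> S then t \<bullet> i else 0)"
proof -
  have "(\<Sum>j\<in>S. (t \<bullet> j) *\<^sub>R j) \<bullet> i = (\<Sum>j\<in>S. (t \<bullet> j) * (j \<bullet> i))"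
    by (simp add: inner_sum_left)
  also have "\<dots> = (\<Sum>j\<in>S. if j = i then t \<bullet> i else 0)"
    using assms by (intro sum.cong) (auto simp: inner_Basis)
  also have "\<dots> = (if i \<in> S then t \<bullet> i else 0)"
    using assms finite_subset[OF assms(1)] by (simp add: sum.delta')
  finally show ?thesis .
qed

lemma box_bound:
  fixes F :: "'a::euclidean_space \<Rightarrow> 'c::real_normed_vector"
  assumes t: "t \<in> time_box \<delta>"
    and d: "\<And>s j. s \<in> time_box \<delta> \<Longrightarrow> j \<in> Basis \<Longrightarrow>
              ((\<lambda>r. F (s + r *\<^sub>R j)) has_vector_derivative F' s j) (at 0)"
    and b: "\<And>s j. s \<in> time_box \<delta> \<Longrightarrow> j \<in> Basis \<Longrightarrow> norm (F' s j) \<le> M"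
  shows "norm (F t - F 0) \<le> M * (\<Sum>j\<in>Basis. \<bar>t \<bullet> j\<bar>)"
proof -
  have main: "S \<subseteq> Basis \<Longrightarrow> norm (F (\<Sum>j\<in>S. (t \<bullet> j) *\<^sub>R j) - F 0) \<le> M * (\<Sum>j\<in>S. \<bar>t \<bullet> j\<bar>)" for S
  proof (induction S rule: infinite_finite_induct)
    case (infinite S)
    then show ?case using finite_subset[OF _ finite_Basis] by blast
  next
    case empty
    then show ?case by simp
  next
    case (insert j S)
    define s0 where "s0 = (\<Sum>j\<in>S. (t \<bullet> j) *\<^sub>R j)"
    have SB: "S \<subseteq> Basis" and jB: "j \<in> Basis" using insert.prems by auto
    have inbox: "s0 + r *\<^sub>R j \<in> time_box \<delta>" if "\<bar>r\<bar> \<le> \<bar>t \<bullet> j\<bar>" for r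
      unfolding time_box_def
    proof (intro CollectI ballI)
      fix i :: 'a assume iB: "i \<in> Basis"
      have s0i: "s0 \<bullet> i = (if i \<in> S then t \<bullet> i else 0)"
        unfolding s0_def by (rule inner_partial[OF SB iB])
      have "(r *\<^sub>R j) \<bullet> i = (if i = j then r else 0)"
        using iB jB by (simp add: inner_Basis)
      then have "(s0 + r *\<^sub>R j) \<bullet> i = (if i \<in> S then t \<bullet> i else 0) + (if i = j then r else 0)"
        using s0i by (simp add: inner_add_left)
      moreover have "\<bar>t \<bullet> i\<bar> < \<delta>" using t iB by (auto simp: time_box_def)
      ultimately show "\<bar>(s0 + r *\<^sub>R j) \<bullet> i\<bar> < \<delta>"
        using insert.hyps(2) that by auto
    qed
    have "norm (F (s0 + (t \<bullet> j) *\<^sub>R j) - F (s0 + 0 *\<^sub>R j)) \<le> M * \<bar>t \<bullet> j\<bar>"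
    proof (rule seg_bound[where g = "\<lambda>r. F (s0 + r *\<^sub>R j)" and g' = "\<lambda>r. F' (s0 + r *\<^sub>R j) j"])
      fix r assume r: "r \<in> closed_segment 0 (t \<bullet> j)"
      then have ra: "\<bar>r\<bar> \<le> \<bar>t \<bullet> j\<bar>"
        by (auto simp: closed_segment_eq_real_ivl split: if_splits)
      have "((\<lambda>h. F ((s0 + r *\<^sub>R j) + h *\<^sub>R j)) has_vector_derivative F' (s0 + r *\<^sub>R j) j) (at 0)"
        by (rule d[OF inbox[OF ra] jB])
      then show "((\<lambda>h. F (s0 + (r + h) *\<^sub>R j)) has_vector_derivative F' (s0 + r *\<^sub>R j) j) (at 0)"
        by (simp add: scaleR_add_left add.assoc)
      show "norm (F' (s0 + r *\<^sub>R j) j) \<le> M" by (rule b[OF inbox[OF ra] jB])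
    qed
    then have 1: "norm (F (s0 + (t \<bullet> j) *\<^sub>R j) - F s0) \<le> M * \<bar>t \<bullet> j\<bar>" by simp
    have 2: "norm (F s0 - F 0) \<le> M * (\<Sum>j\<in>S. \<bar>t \<bullet> j\<bar>)" using insert.IH SB s0_def by blast
    have "norm (F (s0 + (t \<bullet> j) *\<^sub>R j) - F 0) \<le> norm (F (s0 + (t \<bullet> j) *\<^sub>R j) - F s0) + norm (F s0 - F 0)"
      by (rule norm_diff_triangle_le[where y="F s0"]) simp_all
    also have "\<dots> \<le> M * \<bar>t \<bullet> j\<bar> + M * (\<Sum>j\<in>S. \<bar>t \<bullet> j\<bar>)" using 1 2 by linarith
    finally have "norm (F (s0 + (t \<bullet> j) *\<^sub>R j) - F 0) \<le> M * (\<bar>t \<bullet> j\<bar> + (\<Sum>j\<in>S. \<bar>t \<bullet> j\<bar>))"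
      by (simp add: distrib_left)
    moreover have "(\<Sum>j\<in>insert j S. (t \<bullet> j) *\<^sub>R j) = s0 + (t \<bullet> j) *\<^sub>R j"
      using insert.hyps unfolding s0_def by (simp add: add.commute)
    moreover have "(\<Sum>j\<in>insert j S. \<bar>t \<bullet> j\<bar>) = \<bar>t \<bullet> j\<bar> + (\<Sum>j\<in>S. \<bar>t \<bullet> j\<bar>)"
      using insert.hyps by simp
    ultimately show ?case by simp
  qed
  from main[of Basis] show ?thesis by (simp add: euclidean_representation)
qed

theorem proposition2p3:
  fixes D :: "'a::euclidean_space \<Rightarrow> 'a \<times> 'b \<Rightarrow> 'b::euclidean_space"
    and Ob :: "('a \<times> 'b) set"
    and y :: "'a \<Rightarrow> 'a \<times> 'b \<Rightarrow> 'a \<times> 'b"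
    and K :: "('a \<times> 'b) set"
    and \<delta> :: real
  assumes O_open: "open Ob" and O0: "0 \<in> Ob"
    and D_lip: "\<And>i. i \<in> Basis \<Longrightarrow> \<exists>C. C-lipschitz_on Ob (D i)"
    and D0: "\<And>i. i \<in> Basis \<Longrightarrow> D i 0 = 0"
    and commute: "\<And>i j. i \<in> Basis \<Longrightarrow> j \<in> Basis \<Longrightarrow>
                    bracket_zero_ae Ob (coord_field D i) (coord_field D j)"
    and \<delta>_pos: "\<delta> > 0"
    and K_compact: "compact K" and K_nbhd: "0 \<in> interior K" and K_O: "K \<subseteq> Ob"
    and y_in: "\<And>t x. t \<in> time_box \<delta> \<Longrightarrow> x \<in> K \<Longrightarrow> y t x \<in> Ob"
    and y_init: "\<And>x. x \<in> K \<Longrightarrow> y 0 x = x"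
    and y_ode: "\<And>t x j. t \<in> time_box \<delta> \<Longrightarrow> x \<in> K \<Longrightarrow> j \<in> Basis \<Longrightarrow>
                  ((\<lambda>s. y (t + s *\<^sub>R j) x) has_vector_derivative
                      coord_field D j (y t x)) (at 0)"
    and y_lip: "\<exists>L. L-lipschitz_on (time_box \<delta> \<times> K) (\<lambda>(t, x). y t x)"
  shows "\<exists>U0 U1 G'. open U0 \<and> (0, 0) \<in> U0 \<and>
           U0 \<subseteq> {(t, z). t \<in> time_box \<delta> \<and> (0, z) \<in> K} \<and>
           open U1 \<and> 0 \<in> U1 \<and> U1 \<subseteq> Ob \<and>
           homeomorphism U0 U1 (\<lambda>(t, z). y t (0, z)) G' \<and>
           (\<exists>L. L-lipschitz_on U0 (\<lambda>(t, z). y t (0, z))) \<and>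
           (\<exists>L'. L'-lipschitz_on U1 G')"
proof -
  obtain L0 where L0: "L0-lipschitz_on (time_box \<delta> \<times> K) (\<lambda>(t, x). y t x)" using y_lip by blast
  define L1 where "L1 = \<bar>L0\<bar> + 1"
  have L1pos: "L1 > 0" by (simp add: L1_def)
  have L1: "L1-lipschitz_on (time_box \<delta> \<times> K) (\<lambda>(t, x). y t x)"
    by (rule lipschitz_on_le[OF L0]) (simp add: L1_def)
  have yL: "norm (y t x - y t' x') \<le> L1 * norm ((t, x) - (t', x'))"
    if "t \<in> time_box \<delta>" "x \<in> K" "t' \<in> time_box \<delta>" "x' \<in> K" for t x t' x'
    using lipschitz_on_normD[OF L1, of "(t,x)" "(t',x')"] that by simp
  have "\<forall>i\<in>Basis. \<exists>C. C-lipschitz_on Ob (D i)" using D_lip by blast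
  then obtain Cf where Cf: "\<forall>i\<in>Basis. (Cf i)-lipschitz_on Ob (D i)"
    using bchoice[of Basis "\<lambda>i C. C-lipschitz_on Ob (D i)"] by blast
  define Ct where "Ct = (\<Sum>i\<in>Basis. \<bar>Cf i\<bar>)"
  have Ct0: "Ct \<ge> 0" by (simp add: Ct_def sum_nonneg)
  have DL: "norm (D i p - D i q) \<le> Ct * norm (p - q)" if "i \<in> Basis" "p \<in> Ob" "q \<in> Ob" for i p q
  proof -
    have "Cf i \<le> Ct" unfolding Ct_def
      using member_le_sum[of i Basis "\<lambda>i. \<bar>Cf i\<bar>"] that(1) by force
    then have "Ct-lipschitz_on Ob (D i)" using Cf that(1) lipschitz_on_le by blast
    then show ?thesis using lipschitz_on_normD that by blast
  qed
  obtain r where r: "r > 0" "ball 0 r \<subseteq> K" using K_nbhd mem_interior by blast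
  define N where "N = real DIM('a)"
  define \<epsilon> where "\<epsilon> = min \<delta> (1 / (2 * (Ct * L1 * N + 1)))"
  have CLN0: "Ct * L1 * N \<ge> 0" using Ct0 L1pos by (simp add: N_def)
  have eps_pos: "\<epsilon> > 0" using \<delta>_pos CLN0 by (simp add: \<epsilon>_def)
  have ball_box: "ball (0::'a) \<epsilon> \<subseteq> time_box \<delta>"
  proof
    fix t :: 'a assume "t \<in> ball 0 \<epsilon>"
    then have "norm t < \<delta>" by (simp add: \<epsilon>_def)
    then show "t \<in> time_box \<delta>" unfolding time_box_def
      by (auto intro: le_less_trans[OF Basis_le_norm])
  qed
  have sum_small: "Ct * L1 * (\<Sum>j\<in>Basis. \<bar>t \<bullet> j\<bar>) \<le> 1/2" if "t \<in> ball 0 \<epsilon>" for t :: 'a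
  proof -
    have "(\<Sum>j\<in>Basis. \<bar>t \<bullet> j\<bar>) \<le> (\<Sum>j\<in>(Basis::'a set). norm t)"
      by (intro sum_mono) (simp add: Basis_le_norm)
    also have "\<dots> = N * norm t" by (simp add: N_def)
    also have "\<dots> \<le> N * \<epsilon>" using that by (intro mult_left_mono) (auto simp: N_def)
    finally have s: "(\<Sum>j\<in>Basis. \<bar>t \<bullet> j\<bar>) \<le> N * \<epsilon>" .
    have "Ct * L1 * (\<Sum>j\<in>Basis. \<bar>t \<bullet> j\<bar>) \<le> Ct * L1 * (N * \<epsilon>)"
      using s Ct0 L1pos by (intro mult_left_mono) auto
    also have "\<dots> = (Ct * L1 * N) * \<epsilon>" by simp
    also have "\<dots> \<le> (Ct * L1 * N + 1) * \<epsilon>" using eps_pos by (intro mult_right_mono) auto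
    also have "\<dots> \<le> (Ct * L1 * N + 1) * (1 / (2 * (Ct * L1 * N + 1)))"
      using CLN0 by (intro mult_left_mono) (auto simp: \<epsilon>_def)
    also have "\<dots> = 1/2" using CLN0 by (simp add: field_simps)
    finally show ?thesis .
  qed
  have yfst: "fst (y t x) = fst x + t" if t: "t \<in> time_box \<delta>" and x: "x \<in> K" for t x
  proof -
    have "norm ((fst (y t x) - t) - (fst (y 0 x) - 0)) \<le> 0 * (\<Sum>j\<in>Basis. \<bar>t \<bullet> j\<bar>)"
    proof (rule box_bound[OF t, where F = "\<lambda>t. fst (y t x) - t" and F' = "\<lambda>s j. 0"])
      fix s j assume s: "(s::'a) \<in> time_box \<delta>" and j: "(j::'a) \<in> Basis"
      have "((\<lambda>r. fst (y (s + r *\<^sub>R j) x)) has_vector_derivative fst (coord_field D j (y s x))) (at 0)"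
        by (rule bounded_linear.has_vector_derivative[OF bounded_linear_fst y_ode[OF s x j]])
      then have "((\<lambda>r. fst (y (s + r *\<^sub>R j) x) - (s + r *\<^sub>R j)) has_vector_derivative
           fst (coord_field D j (y s x)) - j) (at 0)"
        by (rule has_vector_derivative_diff[OF _ lin_vd])
      then have "((\<lambda>r. fst (y (s + r *\<^sub>R j) x) - (s + r *\<^sub>R j)) has_vector_derivative j - j) (at 0)"
        by (simp add: coord_field_def)
      then show "((\<lambda>r. fst (y (s + r *\<^sub>R j) x) - (s + r *\<^sub>R j)) has_vector_derivative 0) (at 0)"
        by simp
    qed simp
    then have "fst (y t x) - t = fst x" using y_init[OF x] by simp
    then show ?thesis by (metis diff_add_cancel)
  qed
  have ylow: "norm (x - x') \<le> 2 * norm (y t x - y t x')"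
    if t: "t \<in> ball 0 \<epsilon>" and x: "x \<in> K" and x': "x' \<in> K" for t x x'
  proof -
    have tb: "t \<in> time_box \<delta>" using t ball_box by blast
    have "norm ((y t x - y t x') - (y 0 x - y 0 x')) \<le> (Ct * L1 * norm (x - x')) * (\<Sum>j\<in>Basis. \<bar>t \<bullet> j\<bar>)"
    proof (rule box_bound[OF tb, where F = "\<lambda>t. y t x - y t x'"
          and F' = "\<lambda>s j. coord_field D j (y s x) - coord_field D j (y s x')"])
      fix s j assume s: "(s::'a) \<in> time_box \<delta>" and j: "(j::'a) \<in> Basis"
      show "((\<lambda>r. y (s + r *\<^sub>R j) x - y (s + r *\<^sub>R j) x') has_vector_derivative
              coord_field D j (y s x) - coord_field D j (y s x')) (at 0)"
        by (intro has_vector_derivative_diff y_ode[OF s x j] y_ode[OF s x' j])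
      have "norm (coord_field D j (y s x) - coord_field D j (y s x')) = norm (D j (y s x) - D j (y s x'))"
        by (simp add: coord_field_def norm_Pair)
      also have "\<dots> \<le> Ct * norm (y s x - y s x')"
        by (rule DL[OF j y_in[OF s x] y_in[OF s x']])
      also have "\<dots> \<le> Ct * (L1 * norm ((s, x) - (s, x')))"
        by (intro mult_left_mono yL[OF s x s x'] Ct0)
      also have "norm ((s, x) - (s, x')) = norm (x - x')" by (simp add: norm_Pair)
      finally show "norm (coord_field D j (y s x) - coord_field D j (y s x')) \<le> Ct * L1 * norm (x - x')"
        by (simp add: mult.assoc)
    qed
    also have "\<dots> = norm (x - x') * (Ct * L1 * (\<Sum>j\<in>Basis. \<bar>t \<bullet> j\<bar>))" by (simp add: algebra_simps)
    also have "\<dots> \<le> norm (x - x') * (1/2)" by (intro mult_left_mono sum_small[OF t]) auto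
    finally have h: "norm ((y t x - y t x') - (x - x')) \<le> norm (x - x') / 2"
      using y_init[OF x] y_init[OF x'] by simp
    have "norm (x - x') \<le> norm (y t x - y t x') + norm ((y t x - y t x') - (x - x'))"
      by (metis norm_minus_commute norm_triangle_sub)
    then show ?thesis using h by simp
  qed
  define Gf where "Gf = (\<lambda>(t::'a, z::'b). y t (0, z))"
  define U0 where "U0 = ball (0::'a) \<epsilon> \<times> ball (0::'b) r"
  have U0_mem: "t \<in> time_box \<delta>" "t \<in> ball 0 \<epsilon>" "(0, z) \<in> K" if "(t, z) \<in> U0" for t z
    using that ball_box r by (auto simp: U0_def norm_Pair dist_norm subset_iff)
  have openU0: "open U0" unfolding U0_def by (intro open_Times) auto
  have U00: "(0, 0) \<in> U0" using eps_pos r by (simp add: U0_def)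
  have U0sub: "U0 \<subseteq> {(t, z). t \<in> time_box \<delta> \<and> (0, z) \<in> K}" using U0_mem by auto
  have GL: "L1-lipschitz_on U0 Gf"
  proof (rule lipschitz_onI)
    fix p q assume p: "p \<in> U0" and q: "q \<in> U0"
    obtain t z t' z' where pq: "p = (t, z)" "q = (t', z')" by (cases p, cases q) auto
    have "norm (y t (0, z) - y t' (0, z')) \<le> L1 * norm ((t, (0::'a, z)) - (t', (0, z')))"
      using U0_mem p q pq by (intro yL) auto
    also have "norm ((t, (0::'a, z)) - (t', (0, z'))) = norm ((t, z) - (t', z'))"
      by (simp add: norm_Pair)
    finally show "dist (Gf p) (Gf q) \<le> L1 * dist p q" by (simp add: pq Gf_def dist_norm)
  qed (use L1pos in auto)
  have Glow: "dist p q \<le> (3 + 2 * L1) * dist (Gf p) (Gf q)" if p: "p \<in> U0" and q: "q \<in> U0" for p q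
  proof -
    obtain t z t' z' where pq: "p = (t, z)" "q = (t', z')" by (cases p, cases q) auto
    note m = U0_mem[of t z] U0_mem[of t' z']
    have tt: "t \<in> time_box \<delta>" "t' \<in> time_box \<delta>" "(0,z) \<in> K" "(0,z') \<in> K" "t \<in> ball 0 \<epsilon>"
      using m p q pq by auto
    define n where "n = norm (Gf p - Gf q)"
    have "fst (Gf p - Gf q) = t - t'"
      using yfst[OF tt(1) tt(3)] yfst[OF tt(2) tt(4)] by (simp add: pq Gf_def)
    then have n1: "norm (t - t') \<le> n" unfolding n_def by (metis norm_fst_le prod.collapse)
    have "norm (z - z') = norm ((0::'a, z) - (0, z'))" by (simp add: norm_Pair)
    also have "\<dots> \<le> 2 * norm (y t (0, z) - y t (0, z'))" by (rule ylow[OF tt(5) tt(3) tt(4)])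
    also have "norm (y t (0, z) - y t (0, z')) \<le> n + norm (y t (0, z') - y t' (0, z'))"
      unfolding n_def pq Gf_def using norm_triangle_ineq[of "y t (0, z) - y t' (0, z')" "y t' (0, z') - y t (0, z')"]
      by (simp add: norm_minus_commute)
    also have "norm (y t (0, z') - y t' (0, z')) \<le> L1 * norm ((t, (0::'a,z')) - (t', (0, z')))"
      by (rule yL[OF tt(1) tt(4) tt(2) tt(4)])
    also have "norm ((t, (0::'a,z')) - (t', (0::'a, z'))) = norm (t - t')" by (simp add: norm_Pair)
    finally have n2: "norm (z - z') \<le> 2 * (n + L1 * norm (t - t'))" by simp
    have "dist p q \<le> norm (t - t') + norm (z - z')"
      using norm_Pair_le[of "t - t'" "z - z'"] by (simp add: pq dist_norm)
    also have "\<dots> \<le> n + 2 * (n + L1 * n)"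
    proof -
      have "L1 * norm (t - t') \<le> L1 * n" using n1 L1pos by (intro mult_left_mono) auto
      then have "2 * (n + L1 * norm (t - t')) \<le> 2 * (n + L1 * n)" by simp
      then show ?thesis using n1 n2 by linarith
    qed
    also have "\<dots> = (3 + 2 * L1) * dist (Gf p) (Gf q)" by (simp add: n_def dist_norm algebra_simps)
    finally show ?thesis .
  qed
  have inj: "inj_on Gf U0"
  proof (rule inj_onI)
    fix p q assume "p \<in> U0" "q \<in> U0" "Gf p = Gf q"
    then show "p = q" using Glow[of p q] by simp
  qed
  have contG: "continuous_on U0 Gf" by (rule lipschitz_on_continuous_on[OF GL])
  define U1 where "U1 = Gf ` U0"
  define G' where "G' = inv_into U0 Gf"
  have openU1: "open U1" unfolding U1_def by (rule invariance_of_domain[OF contG openU0 inj])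
  have U10: "0 \<in> U1"
  proof -
    have "0 \<in> K" using K_nbhd interior_subset by blast
    then have "y 0 0 = 0" by (rule y_init)
    then have "Gf (0, 0) = 0" by (simp add: Gf_def zero_prod_def)
    then show ?thesis using U00 unfolding U1_def by force
  qed
  have U1sub: "U1 \<subseteq> Ob" using U0_mem y_in by (auto simp: U1_def Gf_def)
  have G'L: "(3 + 2 * L1)-lipschitz_on U1 G'"
  proof (rule lipschitz_onI)
    fix a b assume "a \<in> U1" "b \<in> U1"
    then obtain p q where pq: "p \<in> U0" "q \<in> U0" "a = Gf p" "b = Gf q" by (auto simp: U1_def)
    then show "dist (G' a) (G' b) \<le> (3 + 2 * L1) * dist a b"
      using Glow[OF pq(1,2)] inv_into_f_f[OF inj] by (simp add: G'_def)
  qed (use L1pos in auto)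
  have homeo: "homeomorphism U0 U1 Gf G'"
    unfolding homeomorphism_def
  proof (intro conjI ballI)
    show "G' (Gf p) = p" if "p \<in> U0" for p using inv_into_f_f[OF inj that] by (simp add: G'_def)
    show "Gf ` U0 = U1" by (simp add: U1_def)
    show "continuous_on U0 Gf" by (rule contG)
    show "Gf (G' q) = q" if "q \<in> U1" for q using that f_inv_into_f[of q Gf U0] by (simp add: G'_def U1_def)
    show "G' ` U1 = U0"
    proof
      show "G' ` U1 \<subseteq> U0"
      proof
        fix p assume "p \<in> G' ` U1"
        then obtain q where "q \<in> U1" "p = G' q" by blast
        then show "p \<in> U0" using inv_into_into[of q Gf U0] by (simp add: G'_def U1_def)
      qed
      show "U0 \<subseteq> G' ` U1"
      proof
        fix p assume p: "p \<in> U0"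
        then have "G' (Gf p) = p" using inv_into_f_f[OF inj p] by (simp add: G'_def)
        moreover have "Gf p \<in> U1" using p by (simp add: U1_def)
        ultimately show "p \<in> G' ` U1" by (metis imageI)
      qed
    qed
    show "continuous_on U1 G'" by (rule lipschitz_on_continuous_on[OF G'L])
  qed
  show ?thesis
    apply (rule exI[of _ U0], rule exI[of _ U1], rule exI[of _ G'])
    using openU0 U00 U0sub openU1 U10 U1sub homeo GL G'L unfolding Gf_def by blast
qed

end
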